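(* Let $\mathscr{H}$ be a $d$-dimensional complex Hilbert space and let $A=\{|a_j\rangle\}_{j=1}^{d}$ and $B=\{|b_k\rangle\}_{k=1}^{d}$ be two orthonormal bases of $\mathscr{H}$. Let $(A,B)$ denote the $d\times 2d$ matrix whose columns are $|a_1\rangle,\dots,|a_d\rangle,|b_1\rangle,\dots,|b_d\rangle$ (written in some fixed basis of $\mathscr{H}$). Then, for $s\in\{2,\dots,d+1\}$, the bases $A$ and $B$ are $s$-order incompatible if and only if $\operatorname{spark}(A,B)=s$.
   Context: Two orthonormal bases $A$ and $B$ of $\mathscr{H}$ are called $s$-order incompatible, for an integer $s\in\{2,\dots,d+1\}$, if: (1) for all nonempty subsets $S_A\subseteq A$ and $S_B\subseteq B$ with $|S_A|+|S_B|<s$ one has $\operatorname{span}(S_A)\cap\operatorname{span}(S_B)=\{0\}$; and (2) there exist subsets $S_A\subseteq A$, $S_B\subseteq B$ with $|S_A|+|S_B|=s$ such that $\operatorname{span}(S_A)\cap\operatorname{span}(S_B)\neq\{0\}$. Spans are over $\mathbb{C}$. The spark of a matrix $M$ is the smallest integer $k$ such that some set of $k$ columns of $M$ is linearly dependent. *)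

theory Defs
  imports "HOL-Analysis.Analysis"
begin

text \<open>The d-dimensional complex Hilbert space is modelled as complex^'n with CARD('n) = d,
  equipped with the standard Hermitian inner product (linear in the first argument).
  Spans are complex spans, via the library interpretation vec of scalar multiplication (*s).\<close>

definition cinner :: "complex^'n \<Rightarrow> complex^'n \<Rightarrow> complex" where
  "cinner x y = (\<Sum>i\<in>UNIV. x $ i * cnj (y $ i))"

definition orthonormal_basis :: "('n::finite \<Rightarrow> complex^'n) \<Rightarrow> bool" where
  "orthonormal_basis a \<longleftrightarrow> (\<forall>j k. cinner (a j) (a k) = (if j = k then 1 else 0))"

definition s_order_incompatible ::
  "nat \<Rightarrow> ('n::finite \<Rightarrow> complex^'n) \<Rightarrow> ('n \<Rightarrow> complex^'n) \<Rightarrow> bool" where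
  "s_order_incompatible s a b \<longleftrightarrow>
     (\<forall>SA SB. SA \<noteq> {} \<and> SB \<noteq> {} \<and> card SA + card SB < s \<longrightarrow>
        vec.span (a ` SA) \<inter> vec.span (b ` SB) = {0}) \<and>
     (\<exists>SA SB. card SA + card SB = s \<and>
        vec.span (a ` SA) \<inter> vec.span (b ` SB) \<noteq> {0})"

text \<open>A set S of column indices of M gives linearly dependent columns (as a family,
  so repeated columns count as dependent).\<close>
definition columns_dependent :: "'a::field^'c::finite^'r \<Rightarrow> 'c set \<Rightarrow> bool" where
  "columns_dependent M S \<longleftrightarrow>
     (\<exists>c. (\<Sum>j\<in>S. c j *s column j M) = 0 \<and> (\<exists>j\<in>S. c j \<noteq> 0))"

definition spark :: "'a::field^'c::finite^'r \<Rightarrow> nat" where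
  "spark M = (LEAST k. \<exists>S. card S = k \<and> columns_dependent M S)"

definition AB_matrix ::
  "('n::finite \<Rightarrow> complex^'n) \<Rightarrow> ('n \<Rightarrow> complex^'n) \<Rightarrow> complex^('n + 'n)^'n" where
  "AB_matrix a b = (\<chi> i. \<chi> j. case j of Inl p \<Rightarrow> a p $ i | Inr q \<Rightarrow> b q $ i)"

end

theory Submission
  imports Defs
begin

lemma cinner_sum_left:
  "cinner (\<Sum>j\<in>S. c j *s x j) y = (\<Sum>j\<in>S. c j * cinner (x j) y)"
proof -
  have "cinner (\<Sum>j\<in>S. c j *s x j) y = (\<Sum>i\<in>UNIV. \<Sum>j\<in>S. c j * x j $ i * cnj (y $ i))"
    unfolding cinner_def by (simp add: sum_component sum_distrib_right)
  also have "\<dots> = (\<Sum>j\<in>S. \<Sum>i\<in>UNIV. c j * (x j $ i * cnj (y $ i)))"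
    by (subst sum.swap) (simp add: mult.assoc)
  also have "\<dots> = (\<Sum>j\<in>S. c j * cinner (x j) y)"
    unfolding cinner_def by (simp add: sum_distrib_left)
  finally show ?thesis .
qed

lemma ortho_coeff_zero:
  assumes "orthonormal_basis a" "(\<Sum>j\<in>S. c j *s a j) = 0" "k \<in> S"
  shows "c k = 0"
proof -
  have "0 = cinner (\<Sum>j\<in>S. c j *s a j) (a k)" using assms(2) by (simp add: cinner_def)
  also have "\<dots> = (\<Sum>j\<in>S. c j * (if j = k then 1 else 0))"
    using assms(1) unfolding cinner_sum_left orthonormal_basis_def by simp
  also have "\<dots> = c k" using assms(3) by (simp add: if_distrib cong: if_cong)
  finally show ?thesis by simp
qed

lemma ortho_inj:
  assumes "orthonormal_basis a" shows "inj a"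
proof (rule injI)
  fix j k assume "a j = a k"
  then have "cinner (a j) (a k) = cinner (a j) (a j)" by simp
  then show "j = k" using assms unfolding orthonormal_basis_def by (metis zero_neq_one)
qed

lemma ortho_span:
  assumes "orthonormal_basis a"
  shows "v \<in> vec.span (a ` S) \<longleftrightarrow> (\<exists>c. v = (\<Sum>j\<in>S. c j *s a j))"
proof -
  have inj: "inj_on a S" using ortho_inj[OF assms] by (simp add: inj_on_def inj_def)
  have fin: "finite (a ` S)" by simp
  show ?thesis
  proof
    assume "v \<in> vec.span (a ` S)"
    then obtain u where "v = (\<Sum>w\<in>a ` S. u w *s w)" using vec.span_finite[OF fin] by auto
    then have "v = (\<Sum>j\<in>S. u (a j) *s a j)" by (simp add: sum.reindex[OF inj])
    then show "\<exists>c. v = (\<Sum>j\<in>S. c j *s a j)" by (rule exI[of _ "\<lambda>j. u (a j)"])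
  next
    assume "\<exists>c. v = (\<Sum>j\<in>S. c j *s a j)"
    then obtain c where "v = (\<Sum>j\<in>S. c j *s a j)" by blast
    moreover have "\<And>j. j \<in> S \<Longrightarrow> c j *s a j \<in> vec.span (a ` S)"
      by (intro vec.span_scale vec.span_base) simp
    ultimately show "v \<in> vec.span (a ` S)"
      by (simp add: vec.span_sum)
  qed
qed

lemma column_AB_Inl[simp]: "column (Inl p) (AB_matrix a b) = a p"
  by (simp add: column_def AB_matrix_def vec_eq_iff)
lemma column_AB_Inr[simp]: "column (Inr q) (AB_matrix a b) = b q"
  by (simp add: column_def AB_matrix_def vec_eq_iff)

lemma split_Plus: "(S :: ('x + 'y) set) = {p. Inl p \<in> S} <+> {q. Inr q \<in> S}"
  by (auto simp: Plus_def) (metis sum.exhaust image_eqI mem_Collect_eq)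

lemma dep_to_pair:
  assumes oa: "orthonormal_basis a" and ob: "orthonormal_basis b"
    and dep: "columns_dependent (AB_matrix a b) S"
  shows "\<exists>SA SB. SA \<noteq> {} \<and> SB \<noteq> {} \<and> card S = card SA + card SB \<and>
           vec.span (a ` SA) \<inter> vec.span (b ` SB) \<noteq> {0}"
proof -
  define SA where "SA = {p. Inl p \<in> S}"
  define SB where "SB = {q. Inr q \<in> S}"
  have S: "S = SA <+> SB" unfolding SA_def SB_def by (rule split_Plus)
  obtain c where c0: "(\<Sum>j\<in>S. c j *s column j (AB_matrix a b)) = 0" and cnz: "\<exists>j\<in>S. c j \<noteq> 0"
    using dep unfolding columns_dependent_def by blast
  define v where "v = (\<Sum>p\<in>SA. c (Inl p) *s a p)"
  define w where "w = (\<Sum>q\<in>SB. c (Inr q) *s b q)"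
  have vw: "v + w = 0" using c0 unfolding S v_def w_def by (simp add: sum.Plus o_def)
  have w': "v = (\<Sum>q\<in>SB. (- c (Inr q)) *s b q)"
  proof -
    have "v = - w" using vw by (simp only: eq_neg_iff_add_eq_0)
    also have "- w = (\<Sum>q\<in>SB. (- c (Inr q)) *s b q)" unfolding w_def
      by (simp only: sum_negf[symmetric] vec.scale_minus_left)
    finally show ?thesis .
  qed
  have vnz: "v \<noteq> 0"
  proof
    assume v0: "v = 0"
    then have w0: "w = 0" using vw by simp
    have "\<forall>j\<in>S. c j = 0"
    proof
      fix j assume jS: "j \<in> S"
      show "c j = 0"
      proof (cases j)
        case (Inl p)
        then have "p \<in> SA" using jS SA_def by blast
        then have "c (Inl p) = 0"
          using ortho_coeff_zero[OF oa, of "\<lambda>p. c (Inl p)" SA p] v0 v_def by metis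
        then show ?thesis using Inl by blast
      next
        case (Inr q)
        then have "q \<in> SB" using jS SB_def by blast
        then have "c (Inr q) = 0"
          using ortho_coeff_zero[OF ob, of "\<lambda>q. c (Inr q)" SB q] w0 w_def by metis
        then show ?thesis using Inr by blast
      qed
    qed
    then show False using cnz by blast
  qed
  have "SA \<noteq> {}"
  proof
    assume "SA = {}"
    then have "v = 0" unfolding v_def by (simp only: sum.empty)
    then show False using vnz by blast
  qed
  moreover have "SB \<noteq> {}"
  proof
    assume "SB = {}"
    then have "v = 0" using w' by (simp only: sum.empty)
    then show False using vnz by blast
  qed
  moreover have "card S = card SA + card SB" unfolding S by (simp add: card_Plus)
  moreover have "v \<in> vec.span (a ` SA)" unfolding ortho_span[OF oa] v_def
    by (rule exI[of _ "\<lambda>p. c (Inl p)"]) (rule refl)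
  moreover have "v \<in> vec.span (b ` SB)" unfolding ortho_span[OF ob] w'
    by (rule exI[of _ "\<lambda>q. - c (Inr q)"]) (rule refl)
  ultimately show ?thesis using vnz by blast
qed

lemma pair_to_dep:
  assumes oa: "orthonormal_basis a" and ob: "orthonormal_basis b"
    and nt: "vec.span (a ` SA) \<inter> vec.span (b ` SB) \<noteq> {0}"
  shows "columns_dependent (AB_matrix a b) (SA <+> SB) \<and> card (SA <+> SB) = card SA + card SB"
proof -
  have "0 \<in> vec.span (a ` SA) \<inter> vec.span (b ` SB)" by (simp add: vec.span_zero)
  then obtain v where v: "v \<in> vec.span (a ` SA)" "v \<in> vec.span (b ` SB)" "v \<noteq> 0" using nt by blast
  obtain c where c: "v = (\<Sum>p\<in>SA. c p *s a p)" using v(1) ortho_span[OF oa] by blast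
  obtain d where d: "v = (\<Sum>q\<in>SB. d q *s b q)" using v(2) ortho_span[OF ob] by blast
  define f where "f = case_sum c (\<lambda>q. - d q)"
  have "(\<Sum>j\<in>SA <+> SB. f j *s column j (AB_matrix a b)) = (\<Sum>p\<in>SA. c p *s a p) - (\<Sum>q\<in>SB. d q *s b q)"
    unfolding f_def by (simp add: sum.Plus o_def sum_negf)
  also have "\<dots> = 0" using c d by (metis diff_self)
  finally have "(\<Sum>j\<in>SA <+> SB. f j *s column j (AB_matrix a b)) = 0" .
  moreover have "\<exists>j\<in>SA <+> SB. f j \<noteq> 0"
  proof (rule ccontr)
    assume "\<not> ?thesis"
    then have "\<forall>p\<in>SA. c p = 0" unfolding f_def by (metis InlI sum.case(1))
    then have "v = 0" unfolding c by simp
    then show False using v(3) by simp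
  qed
  ultimately have "columns_dependent (AB_matrix a b) (SA <+> SB)"
    unfolding columns_dependent_def by blast
  moreover have "card (SA <+> SB) = card SA + card SB" by (simp add: card_Plus)
  ultimately show ?thesis by blast
qed

lemma exists_dep:
  fixes a b :: "'n::finite \<Rightarrow> complex^'n"
  assumes oa: "orthonormal_basis a" and ob: "orthonormal_basis b"
  shows "\<exists>S. columns_dependent (AB_matrix a b) S"
proof -
  have inj: "inj a" using ortho_inj[OF oa] .
  have indep: "vec.independent (range a)"
  proof
    assume "vec.dependent (range a)"
    then obtain u where u1: "\<exists>v\<in>range a. u v \<noteq> 0" and u2: "(\<Sum>v\<in>range a. u v *s v) = 0"
      using vec.dependent_finite[of "range a"] by auto
    have "(\<Sum>j\<in>UNIV. u (a j) *s a j) = 0" using u2 by (simp add: sum.reindex[OF inj])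
    then have "\<forall>j. u (a j) = 0" using ortho_coeff_zero[OF oa, of "\<lambda>j. u (a j)" UNIV] by blast
    then show False using u1 by auto
  qed
  have card: "card (range a) = vec.dim (UNIV :: (complex^'n) set)"
    using inj by (simp add: card_image card_cart_basis)
  have "UNIV \<subseteq> vec.span (range a)"
    using vec.card_eq_dim[of "range a" UNIV] card indep by simp
  then have bin: "b undefined \<in> vec.span (a ` UNIV)" by auto
  have "b undefined \<in> vec.span (b ` {undefined})" by (simp add: vec.span_base)
  moreover have "b undefined \<noteq> 0"
  proof
    assume "b undefined = 0"
    then have "cinner (b undefined) (b undefined) = 0" by (simp add: cinner_def)
    then show False using ob unfolding orthonormal_basis_def by (metis zero_neq_one)
  qed
  ultimately have "vec.span (a ` UNIV) \<inter> vec.span (b ` {undefined}) \<noteq> {0}" using bin by blast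
  then show ?thesis using pair_to_dep[OF oa ob] by blast
qed

theorem mainTheorem1:
  fixes a b :: "'n::finite \<Rightarrow> complex^'n" and s :: nat
  assumes "orthonormal_basis a" and "orthonormal_basis b"
    and "2 \<le> s" and "s \<le> CARD('n) + 1"
  shows "s_order_incompatible s a b \<longleftrightarrow> spark (AB_matrix a b) = s"
proof
  assume I: "s_order_incompatible s a b"
  then obtain SA SB where c: "card SA + card SB = s" and nt: "vec.span (a ` SA) \<inter> vec.span (b ` SB) \<noteq> {0}"
    unfolding s_order_incompatible_def by blast
  have Ps: "\<exists>S. card S = s \<and> columns_dependent (AB_matrix a b) S"
    using pair_to_dep[OF assms(1,2) nt] c by blast
  show "spark (AB_matrix a b) = s" unfolding spark_def
  proof (rule Least_equality)
    show "\<exists>S. card S = s \<and> columns_dependent (AB_matrix a b) S" using Ps .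
  next
    fix k assume "\<exists>S. card S = k \<and> columns_dependent (AB_matrix a b) S"
    then obtain S where kS: "card S = k" and dS: "columns_dependent (AB_matrix a b) S" by blast
    obtain SA' SB' where "SA' \<noteq> {}" "SB' \<noteq> {}" and kk: "card S = card SA' + card SB'"
      and "vec.span (a ` SA') \<inter> vec.span (b ` SB') \<noteq> {0}"
      using dep_to_pair[OF assms(1,2) dS] by blast
    show "s \<le> k"
    proof (rule ccontr)
      assume "\<not> s \<le> k"
      then have "card SA' + card SB' < s" using kS kk by simp
      then have "vec.span (a ` SA') \<inter> vec.span (b ` SB') = {0}"
        using I[unfolded s_order_incompatible_def] \<open>SA' \<noteq> {}\<close> \<open>SB' \<noteq> {}\<close> by blast
      then show False using \<open>vec.span (a ` SA') \<inter> vec.span (b ` SB') \<noteq> {0}\<close> by blast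
    qed
  qed
next
  assume sp: "spark (AB_matrix a b) = s"
  obtain S0 where "columns_dependent (AB_matrix a b) S0" using exists_dep[OF assms(1,2)] by blast
  then have ex: "\<exists>k S. card S = k \<and> columns_dependent (AB_matrix a b) S" by blast
  have "\<exists>S. card S = s \<and> columns_dependent (AB_matrix a b) S"
    using LeastI_ex[OF ex] sp unfolding spark_def by simp
  then obtain S where sS: "card S = s" and dS: "columns_dependent (AB_matrix a b) S" by blast
  obtain SA SB where "card S = card SA + card SB" and p2b: "vec.span (a ` SA) \<inter> vec.span (b ` SB) \<noteq> {0}"
    using dep_to_pair[OF assms(1,2) dS] by blast
  then have p2: "card SA + card SB = s" "vec.span (a ` SA) \<inter> vec.span (b ` SB) \<noteq> {0}" using sS by simp_all
  have p1: "vec.span (a ` SA) \<inter> vec.span (b ` SB) = {0}"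
    if "SA \<noteq> {}" "SB \<noteq> {}" "card SA + card SB < s" for SA SB
  proof (rule ccontr)
    assume "vec.span (a ` SA) \<inter> vec.span (b ` SB) \<noteq> {0}"
    then have "\<exists>S. card S = card SA + card SB \<and> columns_dependent (AB_matrix a b) S"
      using pair_to_dep[OF assms(1,2)] by blast
    then have "spark (AB_matrix a b) \<le> card SA + card SB" unfolding spark_def by (rule Least_le)
    then show False using sp that(3) by simp
  qed
  show "s_order_incompatible s a b" unfolding s_order_incompatible_def using p1 p2 by blast
qed

end
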